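(* For all positive integers $m$ and $k$, \[ \sigma_k(m)=\tau_k(m+1)-\tau_{k-1}(m). \]
   Context: $f_\lambda$ denotes the number of standard Young tableaux of shape $\lambda$, $l(\lambda)$ the number of parts and $d_\lambda$ the number of distinct parts of a partition $\lambda$. For integers $k\ge 0$, $n\ge 1$: $\tau_k(n)=\sum_{\lambda\vdash n,\ l(\lambda)\le k} f_\lambda$ (so $\tau_0(n)=0$) and $\sigma_k(n)=\sum_{\lambda\vdash n,\ l(\lambda)\le k} d_\lambda f_\lambda$. *)

theory Defs
  imports Main
begin

definition is_partition :: "nat \<Rightarrow> nat list \<Rightarrow> bool" where
  "is_partition n lam \<longleftrightarrow> sorted_wrt (\<ge>) lam \<and> (\<forall>x\<in>set lam. 0 < x) \<and> sum_list lam = n"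

definition cells :: "nat list \<Rightarrow> (nat \<times> nat) set" where
  "cells lam = {(i, j). i < length lam \<and> j < lam ! i}"

definition SYT :: "nat list \<Rightarrow> (nat \<times> nat \<Rightarrow> nat) set" where
  "SYT lam = {T. bij_betw T (cells lam) {1..sum_list lam}
              \<and> (\<forall>c. c \<notin> cells lam \<longrightarrow> T c = 0)
              \<and> (\<forall>i j. (i, Suc j) \<in> cells lam \<longrightarrow> T (i, j) < T (i, Suc j))
              \<and> (\<forall>i j. (Suc i, j) \<in> cells lam \<longrightarrow> T (i, j) < T (Suc i, j))}"

definition f_syt :: "nat list \<Rightarrow> nat" where
  "f_syt lam = card (SYT lam)"

definition d_parts :: "nat list \<Rightarrow> nat" where
  "d_parts lam = card (set lam)"

definition tau :: "nat \<Rightarrow> nat \<Rightarrow> nat" where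
  "tau k n = (\<Sum>lam\<in>{lam. is_partition n lam \<and> length lam \<le> k}. f_syt lam)"

definition sigma :: "nat \<Rightarrow> nat \<Rightarrow> nat" where
  "sigma k n = (\<Sum>lam\<in>{lam. is_partition n lam \<and> length lam \<le> k}. d_parts lam * f_syt lam)"

end

theory Submission imports Defs "HOL-Library.FuncSet" begin

definition syt :: "(nat \<times> nat) set \<Rightarrow> (nat \<times> nat \<Rightarrow> nat) set" where
  "syt D = {T. bij_betw T D {1..card D}
              \<and> (\<forall>c. c \<notin> D \<longrightarrow> T c = 0)
              \<and> (\<forall>i j. (i, Suc j) \<in> D \<longrightarrow> T (i, j) < T (i, Suc j))
              \<and> (\<forall>i j. (Suc i, j) \<in> D \<longrightarrow> T (i, j) < T (Suc i, j))}"

definition corners :: "(nat \<times> nat) set \<Rightarrow> (nat \<times> nat) set" where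
  "corners D = {c\<in>D. (fst c, Suc (snd c)) \<notin> D \<and> (Suc (fst c), snd c) \<notin> D}"

lemma finite_syt:
  assumes "finite D" shows "finite (syt D)"
proof -
  have "syt D \<subseteq> (\<lambda>f c. if c \<in> D then f c else 0) ` (PiE D (\<lambda>_. {..card D}))"
  proof
    fix T assume T: "T \<in> syt D"
    hence b: "bij_betw T D {1..card D}" and z: "\<forall>c. c \<notin> D \<longrightarrow> T c = 0"
      by (auto simp: syt_def)
    have "T = (\<lambda>c. if c \<in> D then restrict T D c else 0)" using z by (intro ext) (auto simp: restrict_apply)
    moreover have "restrict T D \<in> PiE D (\<lambda>_. {..card D})"
      using b by (auto simp: bij_betw_def)
    ultimately show "T \<in> (\<lambda>f c. if c \<in> D then f c else 0) ` (PiE D (\<lambda>_. {..card D}))"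
      by blast
  qed
  thus ?thesis by (rule finite_subset) (auto intro: finite_PiE assms)
qed

lemma syt_le:
  assumes "T \<in> syt D" "x \<in> D" shows "T x \<le> card D" "1 \<le> T x"
  using assms by (auto simp: syt_def bij_betw_def)

lemma syt_zero: "T \<in> syt D \<Longrightarrow> x \<notin> D \<Longrightarrow> T x = 0"
  unfolding syt_def by blast

lemma branch:
  assumes fin: "finite D" and ne: "D \<noteq> {}"
  shows "card (syt D) = (\<Sum>c\<in>corners D. card (syt (D - {c})))"
proof -
  define n where "n = card D"
  have n1: "n \<ge> 1" using fin ne n_def by (simp add: Suc_leI card_gt_0_iff)
  have cD: "\<And>c. c \<in> D \<Longrightarrow> card (D - {c}) = n - 1" using fin n_def by simp
  define f where "f T = (let c = inv_into D T n in (c, T(c := 0)))" for T :: "nat \<times> nat \<Rightarrow> nat"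
  define g where "g = (\<lambda>(c, T'::nat \<times> nat \<Rightarrow> nat). T'(c := n))"
  have key: "inv_into D T n \<in> D \<and> T (inv_into D T n) = n" if "T \<in> syt D" for T
  proof -
    have b: "bij_betw T D {1..n}" using that by (simp add: syt_def n_def)
    have "n \<in> T ` D" using b n1 by (auto simp: bij_betw_def)
    thus ?thesis by (simp add: inv_into_into f_inv_into_f)
  qed
  have bij: "bij_betw f (syt D) (Sigma (corners D) (\<lambda>c. syt (D - {c})))"
  proof (rule bij_betw_byWitness[where f' = g])
    show "\<forall>a\<in>syt D. g (f a) = a"
    proof
      fix a assume "a \<in> syt D"
      from key[OF this] show "g (f a) = a" by (simp add: f_def g_def Let_def fun_upd_idem)
    qed
    show "\<forall>a'\<in>Sigma (corners D) (\<lambda>c. syt (D - {c})). f (g a') = a'"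
    proof
      fix a' assume a': "a' \<in> Sigma (corners D) (\<lambda>c. syt (D - {c}))"
      then obtain c T' where a'e: "a' = (c, T')" and c: "c \<in> corners D" and T': "T' \<in> syt (D - {c})"
        by auto
      have cD': "c \<in> D" using c by (simp add: corners_def)
      have T'0: "T' c = 0" using syt_zero[OF T'] by simp
      have bT': "bij_betw T' (D - {c}) {1..n-1}" using T' cD[OF cD'] by (simp add: syt_def)
      have "bij_betw (T'(c := n)) (D - {c}) {1..n-1}"
        using bT' by (rule bij_betw_cong[THEN iffD1, rotated]) auto
      hence inj0: "inj_on (T'(c := n)) (D - {c})" by (simp add: bij_betw_def)
      have "T' ` (D - {c}) = {1..n-1}" using bT' by (simp add: bij_betw_def)
      hence "n \<notin> T' ` (D - {c})" using n1 by auto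
      hence nimg: "(T'(c := n)) c \<notin> (T'(c := n)) ` (D - {c} - {c})" by simp
      have "inj_on (T'(c := n)) (insert c (D - {c}))"
        using inj0 nimg by (rule inj_on_insert[THEN iffD2, OF conjI])
      hence inj: "inj_on (T'(c := n)) D" using cD' by (simp add: insert_absorb)
      have "inv_into D (T'(c := n)) n = c"
        using inv_into_f_f[OF inj cD'] by simp
      thus "f (g a') = a'" using T'0 by (simp add: a'e f_def g_def Let_def fun_upd_idem)
    qed
    show "f ` syt D \<subseteq> Sigma (corners D) (\<lambda>c. syt (D - {c}))"
    proof
      fix y assume "y \<in> f ` syt D"
      then obtain T where T: "T \<in> syt D" and y: "y = f T" by auto
      define c where "c = inv_into D T n"
      have cD': "c \<in> D" and Tc: "T c = n" using key[OF T] c_def by auto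
      have b: "bij_betw T D {1..n}" using T by (simp add: syt_def n_def)
      have le: "\<And>x. x \<in> D \<Longrightarrow> T x \<le> n" using syt_le[OF T] n_def by auto
      have corner: "c \<in> corners D"
      proof -
        obtain i j where cij: "c = (i, j)" by (cases c)
        have "(i, Suc j) \<notin> D"
        proof
          assume h: "(i, Suc j) \<in> D"
          hence "T (i, j) < T (i, Suc j)" using T by (simp add: syt_def)
          thus False using le[OF h] Tc cij by simp
        qed
        moreover have "(Suc i, j) \<notin> D"
        proof
          assume h: "(Suc i, j) \<in> D"
          hence "T (i, j) < T (Suc i, j)" using T by (simp add: syt_def)
          thus False using le[OF h] Tc cij by simp
        qed
        ultimately show ?thesis using cD' cij by (simp add: corners_def)
      qed
      have "bij_betw T (D - {c}) ({1..n} - {n})"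
        by (rule bij_betw_DiffI[OF b]) (use cD' Tc n1 in auto)
      moreover have "{1..n} - {n} = {1..n-1}" using n1 by auto
      ultimately have "bij_betw T (D - {c}) {1..card (D - {c})}" using cD[OF cD'] by simp
      hence b': "bij_betw (T(c := 0)) (D - {c}) {1..card (D - {c})}"
        by (rule bij_betw_cong[THEN iffD1, rotated]) auto
      have pos: "\<And>x. x \<in> D \<Longrightarrow> 0 < T x" using syt_le(2)[OF T] by fastforce
      have "T(c := 0) \<in> syt (D - {c})"
        unfolding syt_def using b' T pos
        by (auto simp: syt_def)
      thus "y \<in> Sigma (corners D) (\<lambda>c. syt (D - {c}))"
        using corner by (simp add: y f_def Let_def c_def[symmetric])
    qed
    show "g ` Sigma (corners D) (\<lambda>c. syt (D - {c})) \<subseteq> syt D"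
    proof
      fix y assume "y \<in> g ` Sigma (corners D) (\<lambda>c. syt (D - {c}))"
      then obtain c T' where y: "y = T'(c := n)" and c: "c \<in> corners D" and T': "T' \<in> syt (D - {c})"
        by (auto simp: g_def)
      have cD': "c \<in> D" using c by (simp add: corners_def)
      have T'0: "\<And>x. x \<notin> D - {c} \<Longrightarrow> T' x = 0" using syt_zero[OF T'] by simp
      have bT': "bij_betw T' (D - {c}) {1..n-1}" using T' cD[OF cD'] by (simp add: syt_def)
      have le': "\<And>x. T' x \<le> n - 1"
      proof -
        fix x show "T' x \<le> n - 1"
          using bT' T'0[of x] by (cases "x \<in> D - {c}") (auto simp: bij_betw_def)
      qed
      have pos': "\<And>x. x \<in> D - {c} \<Longrightarrow> 0 < T' x" using bij_betw_apply[OF bT'] by fastforce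
      have "bij_betw (T'(c := n)) (D - {c}) {1..n-1}"
        using bT' by (rule bij_betw_cong[THEN iffD1, rotated]) auto
      moreover have "bij_betw (T'(c := n)) {c} {n}" by simp
      ultimately have "bij_betw (\<lambda>x. if x \<in> D - {c} then (T'(c := n)) x else (T'(c := n)) x) ((D - {c}) \<union> {c}) ({1..n-1} \<union> {n})"
        by (rule bij_betw_disjoint_Un) (use n1 in auto)
      hence "bij_betw (T'(c := n)) ((D - {c}) \<union> {c}) ({1..n-1} \<union> {n})"
        by (simp only: if_cancel)
      moreover have "(D - {c}) \<union> {c} = D" using cD' by auto
      moreover have "{1..n-1} \<union> {n} = {1..n}" using n1 by auto
      ultimately have b: "bij_betw y D {1..card D}" by (simp add: y n_def)
      have z: "\<forall>x. x \<notin> D \<longrightarrow> y x = 0" using T'0 cD' y by auto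
      have cc: "(fst c, Suc (snd c)) \<notin> D" "(Suc (fst c), snd c) \<notin> D" using c by (auto simp: corners_def)
      have r: "\<forall>i j. (i, Suc j) \<in> D \<longrightarrow> y (i, j) < y (i, Suc j)"
      proof (intro allI impI)
        fix i j assume h: "(i, Suc j) \<in> D"
        show "y (i, j) < y (i, Suc j)"
        proof (cases "(i, Suc j) = c")
          case True
          hence "(i, j) \<noteq> c" by auto
          thus ?thesis using True le'[of "(i,j)"] n1 y by auto
        next
          case False
          have "(i, j) \<noteq> c" using h cc by auto
          moreover have "(i, Suc j) \<in> D - {c}" using h False by auto
          ultimately show ?thesis using T' False y by (auto simp: syt_def)
        qed
      qed
      have d: "\<forall>i j. (Suc i, j) \<in> D \<longrightarrow> y (i, j) < y (Suc i, j)"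
      proof (intro allI impI)
        fix i j assume h: "(Suc i, j) \<in> D"
        show "y (i, j) < y (Suc i, j)"
        proof (cases "(Suc i, j) = c")
          case True
          hence "(i, j) \<noteq> c" by auto
          thus ?thesis using True le'[of "(i,j)"] n1 y by auto
        next
          case False
          have "(i, j) \<noteq> c" using h cc by auto
          moreover have "(Suc i, j) \<in> D - {c}" using h False by auto
          ultimately show ?thesis using T' False y by (auto simp: syt_def)
        qed
      qed
      show "y \<in> syt D" using b z r d by (simp add: syt_def)
    qed
  qed
  have "card (syt D) = card (Sigma (corners D) (\<lambda>c. syt (D - {c})))"
    using bij by (rule bij_betw_same_card)
  also have "\<dots> = (\<Sum>c\<in>corners D. card (syt (D - {c})))"
    using fin by (intro card_SigmaI) (auto simp: corners_def intro: finite_syt finite_subset)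
  finally show ?thesis .
qed


lemma part_nth: "is_partition n lam \<longleftrightarrow> (\<forall>i j. i < j \<longrightarrow> j < length lam \<longrightarrow> lam!j \<le> lam!i) \<and> (\<forall>i<length lam. 0 < lam!i) \<and> sum_list lam = n"
  by (auto simp: is_partition_def sorted_wrt_iff_nth_less in_set_conv_nth)

definition C :: "nat list \<Rightarrow> nat set" where
  "C lam = {i. i < length lam \<and> (Suc i = length lam \<or> lam!Suc i < lam!i)}"
definition Ak :: "nat \<Rightarrow> nat list \<Rightarrow> nat set" where
  "Ak k mu = {i. (i < length mu \<and> (i = 0 \<or> mu!i < mu!(i-1))) \<or> (i = length mu \<and> length mu < k)}"
definition addr :: "nat list \<Rightarrow> nat \<Rightarrow> nat list" where
  "addr mu i = (if i < length mu then mu[i := Suc (mu!i)] else mu @ [1])"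
definition rmr :: "nat list \<Rightarrow> nat \<Rightarrow> nat list" where
  "rmr lam i = (if lam!i = 1 then butlast lam else lam[i := lam!i - 1])"

lemma rm_add:
  assumes "is_partition n mu" "i \<in> Ak k mu"
  shows "rmr (addr mu i) i = mu"
proof (cases "i < length mu")
  case True
  have "0 < mu!i" using assms(1) True by (simp add: part_nth)
  thus ?thesis using True by (simp add: addr_def rmr_def)
next
  case False
  hence "i = length mu" using assms(2) by (auto simp: Ak_def)
  thus ?thesis by (simp add: addr_def rmr_def)
qed

lemma add_part:
  assumes p: "is_partition n mu" and l: "length mu \<le> k" and i: "i \<in> Ak k mu"
  shows "is_partition (Suc n) (addr mu i) \<and> length (addr mu i) \<le> k \<and> i \<in> C (addr mu i)"
proof (cases "i < length mu")
  case True
  have d: "\<forall>a b. a < b \<longrightarrow> b < length mu \<longrightarrow> mu!b \<le> mu!a" and pos: "\<forall>a<length mu. 0 < mu!a"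
    and s: "sum_list mu = n" using p by (auto simp: part_nth)
  have ii: "i = 0 \<or> mu!i < mu!(i-1)" using i True by (auto simp: Ak_def)
  have "\<forall>a b. a < b \<longrightarrow> b < length mu \<longrightarrow> mu[i := Suc (mu!i)]!b \<le> mu[i := Suc (mu!i)]!a"
  proof (intro allI impI)
    fix a b assume ab: "a < b" "b < length mu"
    show "mu[i := Suc (mu!i)]!b \<le> mu[i := Suc (mu!i)]!a"
    proof (cases "a = i")
      case True
      have "mu!b \<le> mu!a" using d ab by blast
      thus ?thesis using True ab by (auto simp: nth_list_update)
    next
      case False
      note aF = False
      show ?thesis
      proof (cases "b = i")
        case True
        hence "mu!(i-1) \<le> mu!a" using d ab by (cases "a = i - 1") auto
        thus ?thesis using True aF ab ii by (auto simp: nth_list_update)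
      next
        case False thus ?thesis using aF ab d by (auto simp: nth_list_update)
      qed
    qed
  qed
  moreover have "sum_list (mu[i := Suc (mu!i)]) = Suc n"
    using True s by (simp add: sum_list_update)
  moreover have "\<forall>a<length mu. 0 < mu[i := Suc (mu!i)]!a" using pos True by (auto simp: nth_list_update)
  moreover have "Suc i = length mu \<or> mu!Suc i < Suc (mu!i)"
    using d True by (cases "Suc i < length mu") (auto simp: less_Suc_eq_le)
  ultimately show ?thesis using True l by (auto simp: addr_def part_nth C_def)
next
  case False
  hence ie: "i = length mu" and lk: "length mu < k" using i by (auto simp: Ak_def)
  have d: "\<forall>a b. a < b \<longrightarrow> b < length mu \<longrightarrow> mu!b \<le> mu!a" and pos: "\<forall>a<length mu. 0 < mu!a"
    and s: "sum_list mu = n" using p by (auto simp: part_nth)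
  have "\<forall>a b. a < b \<longrightarrow> b < Suc (length mu) \<longrightarrow> (mu @ [1])!b \<le> (mu @ [1])!a"
  proof (intro allI impI)
    fix a b assume ab: "a < b" "b < Suc (length mu)"
    show "(mu @ [1])!b \<le> (mu @ [1])!a"
      using ab d pos by (cases "b = length mu") (auto simp: nth_append Suc_leI)
  qed
  moreover have "\<forall>a<Suc (length mu). 0 < (mu @ [1])!a" using pos by (auto simp: nth_append)
  ultimately show ?thesis using ie lk s by (auto simp: addr_def part_nth C_def)
qed

lemma rm_part:
  assumes p: "is_partition (Suc n) lam" and l: "length lam \<le> k" and i: "i \<in> C lam"
  shows "is_partition n (rmr lam i) \<and> length (rmr lam i) \<le> k \<and> i \<in> Ak k (rmr lam i) \<and> addr (rmr lam i) i = lam"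
proof -
  have d: "\<forall>a b. a < b \<longrightarrow> b < length lam \<longrightarrow> lam!b \<le> lam!a" and pos: "\<forall>a<length lam. 0 < lam!a"
    and s: "sum_list lam = Suc n" using p by (auto simp: part_nth)
  have il: "i < length lam" and ic: "Suc i = length lam \<or> lam!Suc i < lam!i" using i by (auto simp: C_def)
  show ?thesis
  proof (cases "lam!i = 1")
    case True
    have ie: "Suc i = length lam"
    proof (rule ccontr)
      assume "Suc i \<noteq> length lam"
      hence "Suc i < length lam" using il by simp
      thus False using ic pos True by fastforce
    qed
    have ne: "lam \<noteq> []" using il by auto
    have "length lam - 1 = i" using ie by simp
    hence "last lam = lam ! i" using ne by (simp add: last_conv_nth)
    hence lam_eq: "lam = butlast lam @ [1]" using ne True by (metis append_butlast_last_id)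
    have lb: "length (butlast lam) = i" using ie by simp
    have "sum_list lam = sum_list (butlast lam) + 1" by (subst lam_eq) simp
    hence "sum_list (butlast lam) = n" using s by simp
    moreover have "\<forall>a b. a < b \<longrightarrow> b < length (butlast lam) \<longrightarrow> butlast lam!b \<le> butlast lam!a"
      using d by (simp add: nth_butlast)
    moreover have "\<forall>a<length (butlast lam). 0 < butlast lam!a" using pos by (simp add: nth_butlast)
    moreover have "addr (butlast lam) i = lam" using lb lam_eq by (simp add: addr_def)
    ultimately show ?thesis using True lb l ie by (auto simp: rmr_def part_nth Ak_def)
  next
    case False
    have "0 < lam!i" using pos il by blast
    hence gt: "1 < lam!i" using False by linarith
    have "\<forall>a b. a < b \<longrightarrow> b < length lam \<longrightarrow> lam[i := lam!i - 1]!b \<le> lam[i := lam!i - 1]!a"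
    proof (intro allI impI)
      fix a b assume ab: "a < b" "b < length lam"
      show "lam[i := lam!i - 1]!b \<le> lam[i := lam!i - 1]!a"
      proof (cases "a = i")
        case True
        hence "lam!b \<le> lam!(Suc i)" using ab d by (cases "b = Suc i") auto
        moreover have "Suc i < length lam" using ab True by simp
        ultimately show ?thesis using True ab ic by (auto simp: nth_list_update)
      next
        case False
        have "lam!b \<le> lam!a" using ab d by blast
        thus ?thesis using False il ab by (auto simp: nth_list_update)
      qed
    qed
    moreover have "sum_list (lam[i := lam!i - 1]) = n" using s il gt by (simp add: sum_list_update)
    moreover have "\<forall>a<length lam. 0 < lam[i := lam!i - 1]!a" using pos gt il by (auto simp: nth_list_update)
    moreover have "i = 0 \<or> lam[i := lam!i - 1]!i < lam[i := lam!i - 1]!(i-1)"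
    proof (cases i)
      case (Suc j)
      have "lam!i \<le> lam!j" using d Suc il by simp
      thus ?thesis using Suc il gt by (auto simp: nth_list_update)
    qed simp
    moreover have "addr (lam[i := lam!i - 1]) i = lam" using il gt by (simp add: addr_def)
    ultimately show ?thesis using False l il by (auto simp: rmr_def part_nth Ak_def)
  qed
qed


lemma cells_Sigma: "cells lam = Sigma {..<length lam} (\<lambda>i. {..<lam!i})"
  by (auto simp: cells_def)

lemma finite_cells: "finite (cells lam)"
  by (simp add: cells_Sigma)

lemma card_cells: "card (cells lam) = sum_list lam"
  by (simp add: cells_Sigma sum_list_sum_nth lessThan_atLeast0)

lemma SYT_syt: "SYT lam = syt (cells lam)"
  by (simp add: SYT_def syt_def card_cells)

lemma corners_cells:
  assumes p: "is_partition n lam"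
  shows "corners (cells lam) = (\<lambda>i. (i, lam!i - 1)) ` C lam"
proof -
  have pos: "\<forall>a<length lam. 0 < lam!a" using p by (simp add: part_nth)
  show ?thesis
  proof (rule set_eqI, rule iffI)
    fix c assume "c \<in> corners (cells lam)"
    then obtain i j where c: "c = (i, j)" and il: "i < length lam" and jl: "j < lam!i"
      and r: "\<not> Suc j < lam!i" and d: "\<not> (Suc i < length lam \<and> j < lam!Suc i)"
      by (cases c) (auto simp: corners_def cells_def)
    have "j = lam!i - 1" using jl r by simp
    moreover have "i \<in> C lam" using il d jl r by (auto simp: C_def)
    ultimately show "c \<in> (\<lambda>i. (i, lam!i - 1)) ` C lam" using c by blast
  next
    fix c assume "c \<in> (\<lambda>i. (i, lam!i - 1)) ` C lam"
    then obtain i where c: "c = (i, lam!i - 1)" and i: "i \<in> C lam" by auto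
    have il: "i < length lam" using i by (simp add: C_def)
    have "0 < lam!i" using pos il by blast
    thus "c \<in> corners (cells lam)" using i il c by (auto simp: corners_def cells_def C_def)
  qed
qed

lemma cells_rmr:
  assumes p: "is_partition (Suc n) lam" and i: "i \<in> C lam"
  shows "cells (rmr lam i) = cells lam - {(i, lam!i - 1)}"
proof -
  have pos: "\<forall>a<length lam. 0 < lam!a" using p by (simp add: part_nth)
  have il: "i < length lam" and ic: "Suc i = length lam \<or> lam!Suc i < lam!i" using i by (auto simp: C_def)
  show ?thesis
  proof (cases "lam!i = 1")
    case True
    have ie: "Suc i = length lam"
    proof (rule ccontr)
      assume "Suc i \<noteq> length lam"
      hence "Suc i < length lam" using il by simp
      thus False using ic pos True by fastforce
    qed
    show ?thesis
    proof (rule set_eqI)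
      fix c :: "nat \<times> nat"
      obtain a b where c: "c = (a, b)" by (cases c)
      have "c \<in> cells (rmr lam i) \<longleftrightarrow> a < length lam - 1 \<and> b < lam!a"
        using True by (auto simp: c rmr_def cells_def nth_butlast)
      moreover have "c \<in> cells lam - {(i, lam!i - 1)} \<longleftrightarrow> a < length lam - 1 \<and> b < lam!a"
        using True ie by (cases "a = i") (auto simp: c cells_def)
      ultimately show "c \<in> cells (rmr lam i) \<longleftrightarrow> c \<in> cells lam - {(i, lam!i - 1)}" by simp
    qed
  next
    case False
    show ?thesis using False il by (auto simp: rmr_def cells_def nth_list_update split: if_splits)
  qed
qed

lemma branch_list:
  assumes p: "is_partition (Suc n) lam"
  shows "f_syt lam = (\<Sum>i\<in>C lam. f_syt (rmr lam i))"
proof -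
  have ne: "cells lam \<noteq> {}"
  proof
    assume "cells lam = {}"
    hence "sum_list lam = 0" using card_cells[of lam] by simp
    moreover have "sum_list lam = Suc n" using p by (simp add: is_partition_def)
    ultimately show False by linarith
  qed
  have "f_syt lam = card (syt (cells lam))" by (simp add: f_syt_def SYT_syt)
  also have "\<dots> = (\<Sum>c\<in>corners (cells lam). card (syt (cells lam - {c})))"
    by (rule branch[OF finite_cells ne])
  also have "\<dots> = (\<Sum>i\<in>C lam. card (syt (cells lam - {(i, lam!i - 1)})))"
    unfolding corners_cells[OF p] by (subst sum.reindex) (auto simp: inj_on_def)
  also have "\<dots> = (\<Sum>i\<in>C lam. f_syt (rmr lam i))"
    by (rule sum.cong) (simp_all add: f_syt_def SYT_syt cells_rmr[OF p])
  finally show ?thesis .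
qed

lemma card_Ak:
  assumes p: "is_partition n mu"
  shows "card (Ak k mu) = d_parts mu + (if length mu < k then 1 else 0)"
proof -
  have d: "\<forall>a b. a < b \<longrightarrow> b < length mu \<longrightarrow> mu!b \<le> mu!a" using p by (simp add: part_nth)
  define A0 where "A0 = {i. i < length mu \<and> (i = 0 \<or> mu!i < mu!(i-1))}"
  have Ae: "Ak k mu = A0 \<union> (if length mu < k then {length mu} else {})"
    by (auto simp: Ak_def A0_def)
  have fA0: "finite A0" by (simp add: A0_def)
  have bij: "bij_betw (nth mu) A0 (set mu)"
  proof (rule bij_betw_imageI)
    show "inj_on (nth mu) A0"
    proof (rule inj_onI)
      fix x y assume x: "x \<in> A0" and y: "y \<in> A0" and e: "mu!x = mu!y"
      show "x = y"
      proof (rule ccontr)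
        assume "x \<noteq> y"
        then consider "x < y" | "y < x" by linarith
        thus False
        proof cases
          case 1
          hence "mu!y < mu!(y-1)" using y by (auto simp: A0_def)
          moreover have "mu!(y-1) \<le> mu!x" using d 1 y by (cases "x = y - 1") (auto simp: A0_def)
          ultimately show False using e by simp
        next
          case 2
          hence "mu!x < mu!(x-1)" using x by (auto simp: A0_def)
          moreover have "mu!(x-1) \<le> mu!y" using d 2 x by (cases "y = x - 1") (auto simp: A0_def)
          ultimately show False using e by simp
        qed
      qed
    qed
    show "nth mu ` A0 = set mu"
    proof
      show "nth mu ` A0 \<subseteq> set mu" by (auto simp: A0_def)
      show "set mu \<subseteq> nth mu ` A0"
      proof
        fix v assume "v \<in> set mu"
        then obtain j where "j < length mu \<and> mu!j = v" by (auto simp: in_set_conv_nth)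
        hence ex: "\<exists>j. j < length mu \<and> mu!j = v" by blast
        define i where "i = (LEAST j. j < length mu \<and> mu!j = v)"
        have i: "i < length mu \<and> mu!i = v" using LeastI_ex[OF ex] i_def by simp
        have "i = 0 \<or> mu!i < mu!(i-1)"
        proof (cases i)
          case (Suc l)
          have "\<not> (l < length mu \<and> mu!l = v)" using not_less_Least[of l "\<lambda>j. j < length mu \<and> mu!j = v"] Suc i_def by simp
          hence "mu!l \<noteq> v" using i Suc by simp
          moreover have "mu!i \<le> mu!l" using d[rule_format, of l i] i Suc by simp
          ultimately show ?thesis using i Suc by simp
        qed simp
        thus "v \<in> nth mu ` A0" using i by (auto simp: A0_def)
      qed
    qed
  qed
  have cA0: "card A0 = d_parts mu" using bij_betw_same_card[OF bij] by (simp add: d_parts_def)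
  have "length mu \<notin> A0" by (simp add: A0_def)
  thus ?thesis using Ae fA0 cA0 by auto
qed

lemma length_le_sum: "\<forall>x\<in>set xs. 1 \<le> x \<Longrightarrow> length xs \<le> sum_list (xs :: nat list)"
  by (induction xs) auto

lemma finite_Pk: "finite {lam. is_partition n lam \<and> length lam \<le> k}"
proof (rule finite_subset)
  show "{lam. is_partition n lam \<and> length lam \<le> k} \<subseteq> {xs. set xs \<subseteq> {..n} \<and> length xs \<le> n}"
  proof (rule subsetI)
    fix lam assume "lam \<in> {lam. is_partition n lam \<and> length lam \<le> k}"
    hence p: "is_partition n lam" by simp
    have "set lam \<subseteq> {..n}" using member_le_sum_list[of _ lam] p by (auto simp: is_partition_def)
    moreover have "length lam \<le> n" using length_le_sum[of lam] p by (auto simp: is_partition_def Suc_le_eq)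
    ultimately show "lam \<in> {xs. set xs \<subseteq> {..n} \<and> length xs \<le> n}" by simp
  qed
  show "finite {xs. set xs \<subseteq> {..n} \<and> length xs \<le> n}" by (rule finite_lists_length_le) simp
qed

lemma finite_C: "finite (C lam)" by (rule finite_subset[of _ "{..<length lam}"]) (auto simp: C_def)
lemma finite_Ak: "finite (Ak k mu)" by (rule finite_subset[of _ "{..length mu}"]) (auto simp: Ak_def)

lemma main_nat:
  assumes k: "1 \<le> k"
  shows "tau k (Suc m) = sigma k m + tau (k - 1) m"
proof -
  let ?P = "\<lambda>n. {lam. is_partition n lam \<and> length lam \<le> k}"
  have "tau k (Suc m) = (\<Sum>lam\<in>?P (Suc m). \<Sum>i\<in>C lam. f_syt (rmr lam i))"
    unfolding tau_def by (rule sum.cong) (auto intro: branch_list)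
  also have "\<dots> = (\<Sum>(lam, i)\<in>Sigma (?P (Suc m)) C. f_syt (rmr lam i))"
    by (rule sum.Sigma) (auto intro: finite_Pk finite_C)
  also have "\<dots> = (\<Sum>(mu, i)\<in>Sigma (?P m) (Ak k). f_syt mu)"
  proof (rule sum.reindex_bij_witness[where i = "\<lambda>(mu, i). (addr mu i, i)" and j = "\<lambda>(lam, i). (rmr lam i, i)"])
    fix a assume "a \<in> Sigma (?P (Suc m)) C"
    then obtain lam i where a: "a = (lam, i)" "is_partition (Suc m) lam" "length lam \<le> k" "i \<in> C lam" by auto
    note r = rm_part[OF a(2,3,4)]
    show "(\<lambda>(mu, i). (addr mu i, i)) ((\<lambda>(lam, i). (rmr lam i, i)) a) = a" using r a by simp
    show "(\<lambda>(lam, i). (rmr lam i, i)) a \<in> Sigma (?P m) (Ak k)" using r a by simp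
  next
    fix b assume "b \<in> Sigma (?P m) (Ak k)"
    then obtain mu i where b: "b = (mu, i)" "is_partition m mu" "length mu \<le> k" "i \<in> Ak k mu" by auto
    note r = add_part[OF b(2,3,4)] rm_add[OF b(2,4)]
    show "(\<lambda>(lam, i). (rmr lam i, i)) ((\<lambda>(mu, i). (addr mu i, i)) b) = b" using r b by simp
    show "(\<lambda>(mu, i). (addr mu i, i)) b \<in> Sigma (?P (Suc m)) C" using r b by simp
  qed auto
  also have "\<dots> = (\<Sum>mu\<in>?P m. \<Sum>i\<in>Ak k mu. f_syt mu)"
    by (rule sum.Sigma[symmetric]) (auto intro: finite_Pk finite_Ak)
  also have "\<dots> = (\<Sum>mu\<in>?P m. d_parts mu * f_syt mu + (if length mu < k then f_syt mu else 0))"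
    by (rule sum.cong) (auto simp: card_Ak algebra_simps)
  also have "\<dots> = sigma k m + (\<Sum>mu\<in>?P m. (if length mu < k then f_syt mu else 0))"
    by (simp add: sum.distrib sigma_def)
  also have "(\<Sum>mu\<in>?P m. (if length mu < k then f_syt mu else 0)) = (\<Sum>mu\<in>{mu \<in> ?P m. length mu < k}. f_syt mu)"
    by (rule sum.inter_filter[symmetric]) (rule finite_Pk)
  also have "{mu \<in> ?P m. length mu < k} = {lam. is_partition m lam \<and> length lam \<le> k - 1}"
    using k by auto
  finally show ?thesis by (simp add: tau_def)
qed

theorem mainTheorem8:
  fixes m k :: nat
  assumes "1 \<le> m" and "1 \<le> k"
  shows "int (sigma k m) = int (tau k (m + 1)) - int (tau (k - 1) m)"
  using main_nat[OF assms(2), of m] by simp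

end
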